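(* Let $\mathcal{T}=(V,\mathsf{p})$ be a directed forest with leafless support $\mathring{\mathcal{T}}$. Then $v_0\in V$ is not a root of $\mathring{\mathcal{T}}$ if and only if $v_0\notin\mathrm{root}(\mathcal{T})$ and there exists a sequence $\{v_n\}_{n=1}^\infty\subseteq V$ such that $\mathsf{p}(v_{n+1})=v_n$ for all $n\in\{0,1,2,\dots\}$.
   Context: A directed forest is a pair $\mathcal{T}=(V,\mathsf{p})$ where $V$ is a nonempty set and $\mathsf{p}\colon V\to V$ satisfies: if $n\in\mathbb{N}$, $v\in V$ and $\mathsf{p}^n(v)=v$, then $\mathsf{p}(v)=v$. Roots: $\mathrm{root}(\mathcal{T})=\{v:\mathsf{p}(v)=v\}$. The forest is leafless if $\mathsf{p}(V)=V$. $(V,\mathsf{p}_1)$ is thinner than $(V,\mathsf{p}_2)$ if $\mathsf{p}_1(v)\in\{v,\mathsf{p}_2(v)\}$ for all $v\in V$ (a partial order). The leafless support $\mathring{\mathcal{T}}=(V,\mathring{\mathsf{p}})$ of $\mathcal{T}$ is the greatest (thickest) leafless directed forest on $V$ thinner than $\mathcal{T}$; such a greatest element exists. *)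

theory Defs
  imports Main
begin

definition directed_forest :: "('a \<Rightarrow> 'a) \<Rightarrow> bool" where
  "directed_forest p \<longleftrightarrow> (\<forall>n v. n \<ge> 1 \<longrightarrow> (p ^^ n) v = v \<longrightarrow> p v = v)"

definition roots :: "('a \<Rightarrow> 'a) \<Rightarrow> 'a set" where
  "roots p = {v. p v = v}"

definition leafless :: "('a \<Rightarrow> 'a) \<Rightarrow> bool" where
  "leafless p \<longleftrightarrow> range p = UNIV"

definition thinner :: "('a \<Rightarrow> 'a) \<Rightarrow> ('a \<Rightarrow> 'a) \<Rightarrow> bool" where
  "thinner p1 p2 \<longleftrightarrow> (\<forall>v. p1 v \<in> {v, p2 v})"

definition leafless_support :: "('a \<Rightarrow> 'a) \<Rightarrow> ('a \<Rightarrow> 'a)" where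
  "leafless_support p = (THE q. directed_forest q \<and> leafless q \<and> thinner q p \<and>
     (\<forall>q'. directed_forest q' \<and> leafless q' \<and> thinner q' p \<longrightarrow> thinner q' q))"

end

theory Submission
  imports Defs
begin

lemma thinner_iter:
  assumes "thinner q p"
  shows "\<forall>v. \<exists>k. (q ^^ n) v = (p ^^ k) v \<and> (q v \<noteq> v \<and> n \<ge> 1 \<longrightarrow> k \<ge> 1)"
proof (induction n)
  case 0
  then show ?case by (auto intro: exI[of _ 0])
next
  case (Suc n)
  show ?case
  proof
    fix v
    show "\<exists>k. (q ^^ Suc n) v = (p ^^ k) v \<and> (q v \<noteq> v \<and> Suc n \<ge> 1 \<longrightarrow> k \<ge> 1)"
    proof (cases "q v = v")
      case True
      then have "(q ^^ Suc n) v = (q ^^ n) v" by (simp add: funpow_Suc_right del: funpow.simps)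
      with Suc True show ?thesis by auto
    next
      case False
      then have qv: "q v = p v" using assms unfolding thinner_def by blast
      obtain k where k: "(q ^^ n) (p v) = (p ^^ k) (p v)" using Suc by blast
      have "(q ^^ Suc n) v = (p ^^ Suc k) v"
        using k qv by (simp add: funpow_Suc_right del: funpow.simps)
      then show ?thesis by (intro exI[of _ "Suc k"]) auto
    qed
  qed
qed

lemma thinner_forest:
  assumes "directed_forest p" "thinner q p"
  shows "directed_forest q"
  unfolding directed_forest_def
proof (intro allI impI)
  fix n v assume n: "n \<ge> (1::nat)" and e: "(q ^^ n) v = v"
  show "q v = v"
  proof (rule ccontr)
    assume ne: "q v \<noteq> v"
    obtain k where k: "(q ^^ n) v = (p ^^ k) v" "k \<ge> 1"
      using thinner_iter[OF assms(2), of n] ne n by blast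
    then have "p v = v" using assms(1) e unfolding directed_forest_def by metis
    then show False using ne assms(2) unfolding thinner_def by auto
  qed
qed

lemma thinner_antisym:
  assumes "thinner a b" "thinner b a" shows "a = b"
proof
  fix v show "a v = b v" using assms unfolding thinner_def by (metis insert_iff singletonD)
qed

theorem lemma4p5:
  fixes p :: "'a \<Rightarrow> 'a" and v0 :: 'a
  assumes "directed_forest p"
  shows "v0 \<notin> roots (leafless_support p) \<longleftrightarrow>
    (v0 \<notin> roots p \<and> (\<exists>v :: nat \<Rightarrow> 'a. v 0 = v0 \<and> (\<forall>n. p (v (Suc n)) = v n)))"
proof -
  define A where "A = {w. p w \<noteq> w \<and> (\<exists>v :: nat \<Rightarrow> 'a. v 0 = w \<and> (\<forall>n. p (v (Suc n)) = v n))}"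
  define q where "q = (\<lambda>w. if w \<in> A then p w else w)"
  have th: "thinner q p" unfolding thinner_def q_def by auto
  have fo: "directed_forest q" using thinner_forest[OF assms th] .
  have pre_q: "\<exists>u. q u = w" for w
  proof (cases "w \<in> A")
    case False then have "q w = w" unfolding q_def by simp
    then show ?thesis by blast
  next
    case True
    then obtain v where v: "v 0 = w" "\<forall>n. p (v (Suc n)) = v n" "p w \<noteq> w" unfolding A_def by blast
    have pv1: "p (v (Suc 0)) = w" using v by simp
    have "v (Suc 0) \<in> A" unfolding A_def
    proof (intro CollectI conjI)
      show "p (v (Suc 0)) \<noteq> v (Suc 0)" using v pv1 by auto
      show "\<exists>u :: nat \<Rightarrow> 'a. u 0 = v (Suc 0) \<and> (\<forall>n. p (u (Suc n)) = u n)"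
        using v by (intro exI[of _ "\<lambda>n. v (Suc n)"]) auto
    qed
    then have "q (v (Suc 0)) = w" unfolding q_def using pv1 by simp
    then show ?thesis by blast
  qed
  have ll: "leafless q" unfolding leafless_def using pre_q by (metis UNIV_I imageI subsetI subset_antisym)
  have gr: "thinner q' q" if h: "directed_forest q' \<and> leafless q' \<and> thinner q' p" for q'
    unfolding thinner_def
  proof
    fix x
    show "q' x \<in> {x, q x}"
    proof (cases "q' x = x")
      case True then show ?thesis by simp
    next
      case False
      have px: "q' x = p x" using False h unfolding thinner_def by blast
      define w where "w = rec_nat x (\<lambda>_ y. SOME u. q' u = y)"
      have w0: "w 0 = x" unfolding w_def by simp
      have wS: "w (Suc n) = (SOME u. q' u = w n)" for n unfolding w_def by simp
      have pre: "\<exists>u. q' u = y" for y using h unfolding leafless_def by (metis UNIV_I imageE)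
      have qS: "q' (w (Suc n)) = w n" for n unfolding wS by (rule someI_ex[OF pre])
      have nr: "q' (w n) \<noteq> w n" for n
      proof (induction n)
        case 0 then show ?case using w0 False by simp
      next
        case (Suc n) then show ?case using qS[of n] by metis
      qed
      have "p (w (Suc n)) = w n" for n
      proof -
        have "q' (w (Suc n)) \<in> {w (Suc n), p (w (Suc n))}" using h unfolding thinner_def by blast
        then show ?thesis using nr[of "Suc n"] qS[of n] by auto
      qed
      then have "x \<in> A" unfolding A_def using w0 False px by auto
      then show ?thesis unfolding q_def using px by simp
    qed
  qed
  have P: "directed_forest q \<and> leafless q \<and> thinner q p \<and>
     (\<forall>q'. directed_forest q' \<and> leafless q' \<and> thinner q' p \<longrightarrow> thinner q' q)"
    using fo ll th gr by blast
  have "leafless_support p = q" unfolding leafless_support_def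
  proof (rule the_equality)
    show "directed_forest q \<and> leafless q \<and> thinner q p \<and>
     (\<forall>q'. directed_forest q' \<and> leafless q' \<and> thinner q' p \<longrightarrow> thinner q' q)" by (rule P)
    fix r assume r: "directed_forest r \<and> leafless r \<and> thinner r p \<and>
     (\<forall>q'. directed_forest q' \<and> leafless q' \<and> thinner q' p \<longrightarrow> thinner q' r)"
    show "r = q" using r P by (metis thinner_antisym)
  qed
  then show ?thesis unfolding roots_def q_def A_def by auto
qed

end
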